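(* There is an absolute constant $c>0$ such that for every $A\ge 1$ there exist a weight $w$ on $[0,1]$ with $[w]_{2,\mathrm{cl}}=A$, a non-homogeneous dyadic filtration $\mathcal D$ of $[0,1]$, and a function $f\in L^2(w)$ such that $$\|f\|_{L^2(w)}\ge c\,A\,\|Sf\|_{L^2(w)}=c\,[w]_{2,\mathrm{cl}}\,\|Sf\|_{L^2(w)}.$$
   Context: $[0,1]$ carries Lebesgue measure, $|I|$ denotes length and $\langle f\rangle_I=|I|^{-1}\int_I f$. A non-homogeneous dyadic filtration of $[0,1]$ is an atomic filtration $\mathcal D=\bigcup_{n\ge0}\mathcal D_n$, $\mathcal D_0=\{[0,1]\}$, where each $\mathcal D_n$ is a finite partition of $[0,1]$ into intervals of positive length and each interval $I\in\mathcal D_n$ is split into exactly two subintervals (its children $\mathrm{ch}(I)$, belonging to $\mathcal D_{n+1}$) of possibly unequal lengths. Martingale differences: $\Delta_I f=\sum_{I'\in\mathrm{ch}(I)}\langle f\rangle_{I'}\mathbf 1_{I'}-\langle f\rangle_I\mathbf 1_I$; square function $Sf=\big(\sum_{I\in\mathcal D}(\Delta_If)^2\big)^{1/2}$. A weight is an integrable function $w>0$ a.e.; $\|f\|_{L^2(w)}^2=\int_0^1|f|^2w$. Classical $A_2$ characteristic: $[w]_{2,\mathrm{cl}}=\sup_{I\subseteq[0,1]}\langle w\rangle_I\langle w^{-1}\rangle_I$, the supremum over all subintervals $I$ of $[0,1]$. *)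

theory Defs
  imports "HOL-Analysis.Analysis"
begin

definition avg :: "(real \<Rightarrow> real) \<Rightarrow> real set \<Rightarrow> real" where
  "avg f I = (LINT x:I|lborel. f x) / measure lborel I"

definition children :: "(nat \<Rightarrow> real set set) \<Rightarrow> nat \<Rightarrow> real set \<Rightarrow> real set set" where
  "children D n I = {J \<in> D (Suc n). J \<subseteq> I}"

definition nh_dyadic_filtration :: "(nat \<Rightarrow> real set set) \<Rightarrow> bool" where
  "nh_dyadic_filtration D \<longleftrightarrow>
     D 0 = {{0..1}} \<and>
     (\<forall>n. \<forall>I\<in>D n. \<exists>a m b. a < m \<and> m < b \<and> I = {a..b} \<and>
                                children D n I = {{a..m}, {m..b}}) \<and>
     (\<forall>n. \<forall>J\<in>D (Suc n). \<exists>I\<in>D n. J \<subseteq> I)"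

definition mdiff :: "(nat \<Rightarrow> real set set) \<Rightarrow> nat \<Rightarrow> real set \<Rightarrow> (real \<Rightarrow> real) \<Rightarrow> real \<Rightarrow> real" where
  "mdiff D n I f x =
     (\<Sum>J\<in>children D n I. avg f J * indicator J x) - avg f I * indicator I x"

definition cond_exp_n :: "(nat \<Rightarrow> real set set) \<Rightarrow> nat \<Rightarrow> (real \<Rightarrow> real) \<Rightarrow> real \<Rightarrow> real" where
  "cond_exp_n D n f x = (\<Sum>I\<in>D n. avg f I * indicator I x)"

definition sqfun_sq :: "(nat \<Rightarrow> real set set) \<Rightarrow> (real \<Rightarrow> real) \<Rightarrow> real \<Rightarrow> ennreal" where
  "sqfun_sq D f x = (\<Sum>n. ennreal (\<Sum>I\<in>D n. (mdiff D n I f x)\<^sup>2))"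

definition is_weight :: "(real \<Rightarrow> real) \<Rightarrow> bool" where
  "is_weight w \<longleftrightarrow> w \<in> borel_measurable lborel \<and> set_integrable lborel {0..1} w \<and>
     (AE x in lborel. x \<in> {0..1} \<longrightarrow> w x > 0)"

text \<open>Finiteness requires w^{-1} integrable on [0,1]; if it is not, the
  characteristic is \<infinity> by convention.\<close>
definition A2_cl :: "(real \<Rightarrow> real) \<Rightarrow> ereal" where
  "A2_cl w = (if set_integrable lborel {0..1} (\<lambda>x. 1 / w x)
     then (SUP p \<in> {(a,b). 0 \<le> a \<and> a < b \<and> b \<le> (1::real)}.
             ereal (avg w {fst p..snd p} * avg (\<lambda>x. 1 / w x) {fst p..snd p}))
     else \<infinity>)"

definition L2w_sq :: "(real \<Rightarrow> real) \<Rightarrow> (real \<Rightarrow> real) \<Rightarrow> ennreal" where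
  "L2w_sq w f = (\<integral>\<^sup>+ x\<in>{0..1}. ennreal ((f x)\<^sup>2 * w x) \<partial>lborel)"

definition Sf_L2w_sq :: "(real \<Rightarrow> real) \<Rightarrow> (nat \<Rightarrow> real set set) \<Rightarrow> (real \<Rightarrow> real) \<Rightarrow> ennreal" where
  "Sf_L2w_sq w D f = (\<integral>\<^sup>+ x\<in>{0..1}. sqfun_sq D f x * ennreal (w x) \<partial>lborel)"

end

theory Submission
  imports Defs
begin

lemma powr_int:
  fixes p s :: real assumes p: "p > -1" and s: "0 \<le> s"
  shows "set_integrable lborel {0..s} (\<lambda>x. x powr p)"
    and "(LINT x:{0..s}|lborel. x powr p) = s powr (p+1) / (p+1)"
proof -
  have hi: "((\<lambda>x. x powr p) has_integral (s powr (p+1) / (p+1))) {0..s}"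
    by (rule has_integral_powr_from_0[OF p s])
  then have "(\<lambda>x. x powr p) absolutely_integrable_on {0..s}"
    by (intro nonnegative_absolutely_integrable_1) (auto simp: integrable_on_def)
  then show si: "set_integrable lborel {0..s} (\<lambda>x. x powr p)"
    unfolding set_integrable_def
    by (subst integrable_completion[symmetric]) auto
  show "(LINT x:{0..s}|lborel. x powr p) = s powr (p+1) / (p+1)"
    using set_borel_integral_eq_integral(2)[OF si] hi by (simp add: integral_unique)
qed

lemma powr_int_ab:
  fixes p a b :: real assumes p: "p > -1" and ab: "0 \<le> a" "a \<le> b"
  shows "set_integrable lborel {a..b} (\<lambda>x. x powr p)"
    and "(LINT x:{a..b}|lborel. x powr p) = (b powr (p+1) - a powr (p+1)) / (p+1)"
proof -
  have sb: "set_integrable lborel {0..b} (\<lambda>x. x powr p)" using powr_int[OF p] ab by auto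
  show si: "set_integrable lborel {a..b} (\<lambda>x. x powr p)"
    by (rule set_integrable_subset[OF sb]) (use ab in auto)
  have sa: "set_integrable lborel {0..a} (\<lambda>x. x powr p)" using powr_int[OF p] ab by auto
  have ib: "(\<lambda>x. x powr p) integrable_on {0..b}" using set_borel_integral_eq_integral(1)[OF sb] .
  have "integral {0..a} (\<lambda>x. x powr p) + integral {a..b} (\<lambda>x. x powr p) = integral {0..b} (\<lambda>x. x powr p)"
    by (rule Henstock_Kurzweil_Integration.integral_combine[OF _ _ ib]) (use ab in auto)
  moreover have "integral {0..a} (\<lambda>x. x powr p) = a powr (p+1) / (p+1)"
    using set_borel_integral_eq_integral(2)[OF sa] powr_int(2)[OF p ab(1)] by simp
  moreover have "integral {0..b} (\<lambda>x. x powr p) = b powr (p+1) / (p+1)"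
    using set_borel_integral_eq_integral(2)[OF sb] powr_int(2)[OF p] ab by simp
  ultimately have "integral {a..b} (\<lambda>x. x powr p) = b powr (p+1) / (p+1) - a powr (p+1) / (p+1)"
    by linarith
  then show "(LINT x:{a..b}|lborel. x powr p) = (b powr (p+1) - a powr (p+1)) / (p+1)"
    using set_borel_integral_eq_integral(2)[OF si] by (simp add: diff_divide_distrib)
qed

lemma powr_nn_int:
  fixes p s :: real assumes p: "p > -1" and s: "0 \<le> s"
  shows "(\<integral>\<^sup>+x\<in>{0..s}. ennreal (x powr p) \<partial>lborel) = ennreal (s powr (p+1) / (p+1))"
proof -
  have i: "integrable lborel (\<lambda>x. indicator {0..s} x *\<^sub>R x powr p)"
    using powr_int(1)[OF p s] unfolding set_integrable_def .
  have "(\<integral>\<^sup>+x\<in>{0..s}. ennreal (x powr p) \<partial>lborel) = (\<integral>\<^sup>+x. ennreal (indicator {0..s} x *\<^sub>R x powr p) \<partial>lborel)"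
    by (intro nn_integral_cong) (auto split: split_indicator)
  also have "\<dots> = ennreal (integral\<^sup>L lborel (\<lambda>x. indicator {0..s} x *\<^sub>R x powr p))"
    by (rule nn_integral_eq_integral[OF i]) (auto split: split_indicator)
  also have "\<dots> = ennreal (s powr (p+1) / (p+1))"
    using powr_int(2)[OF p s] unfolding set_lebesgue_integral_def by simp
  finally show ?thesis .
qed

definition wt :: "real \<Rightarrow> real \<Rightarrow> real" where "wt \<alpha> x = x powr (-\<alpha>)"

lemma wt_inv: "1 / wt \<alpha> x = x powr \<alpha>"
  by (simp add: wt_def powr_minus divide_inverse)

lemma wt_nonneg: "0 \<le> wt \<alpha> x" by (simp add: wt_def)

lemma is_weight_wt: assumes "0 \<le> \<alpha>" "\<alpha> < 1" shows "is_weight (wt \<alpha>)"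
  unfolding is_weight_def
proof (intro conjI)
  show "wt \<alpha> \<in> borel_measurable lborel" unfolding wt_def by measurable
  show "set_integrable lborel {0..1} (wt \<alpha>)" unfolding wt_def using powr_int(1)[of "-\<alpha>" 1] assms by simp
  show "AE x in lborel. x \<in> {0..1} \<longrightarrow> 0 < wt \<alpha> x"
    using AE_lborel_singleton[of 0] by eventually_elim (auto simp: wt_def)
qed

lemma avg_wt: assumes "0 \<le> \<alpha>" "\<alpha> < 1" "0 \<le> a" "a < b"
  shows "avg (wt \<alpha>) {a..b} = (b powr (1-\<alpha>) - a powr (1-\<alpha>)) / ((1-\<alpha>) * (b - a))"
  using powr_int_ab(2)[of "-\<alpha>" a b] assms unfolding avg_def wt_def by simp

lemma avg_wtinv: assumes "0 \<le> \<alpha>" "\<alpha> < 1" "0 \<le> a" "a < b"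
  shows "avg (\<lambda>x. 1 / wt \<alpha> x) {a..b} = (b powr (1+\<alpha>) - a powr (1+\<alpha>)) / ((1+\<alpha>) * (b - a))"
  using powr_int_ab(2)[of "\<alpha>" a b] assms unfolding avg_def wt_inv by (simp add: add.commute)


lemma pp2: fixes x \<alpha> :: real assumes "x > 0"
  shows "x powr (1-\<alpha>) * x powr (1+\<alpha>) = x^2"
proof -
  have "x powr (1-\<alpha>) * x powr (1+\<alpha>) = x powr ((1-\<alpha>)+(1+\<alpha>))" by (rule powr_add[symmetric])
  also have "\<dots> = x powr 2" by simp
  also have "\<dots> = x^2" using assms by (intro powr_numeral) simp
  finally show ?thesis .
qed

lemma amgm_powr:
  fixes a b \<alpha> :: real assumes "0 \<le> a" "a < b" "0 \<le> \<alpha>" "\<alpha> < 1"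
  shows "(b powr (1-\<alpha>) - a powr (1-\<alpha>)) * (b powr (1+\<alpha>) - a powr (1+\<alpha>)) \<le> (b - a)^2"
proof -
  have b: "b > 0" using assms by simp
  have bb: "b powr (1-\<alpha>) * b powr (1+\<alpha>) = b^2" using pp2[OF b] .
  show ?thesis
  proof (cases "a = 0")
    case True
    then show ?thesis using bb by simp
  next
    case False
    then have a: "a > 0" using assms by simp
    have aa: "a powr (1-\<alpha>) * a powr (1+\<alpha>) = a^2" using pp2[OF a] .
    define P where "P = b powr (1-\<alpha>)"
    define Q where "Q = b powr (1+\<alpha>)"
    define R where "R = a powr (1-\<alpha>)"
    define T where "T = a powr (1+\<alpha>)"
    have PQ: "P*Q = b^2" unfolding P_def Q_def by (rule bb)
    have RT: "R*T = a^2" unfolding R_def T_def by (rule aa)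
    have pos: "P \<ge> 0" "Q \<ge> 0" "R \<ge> 0" "T \<ge> 0" unfolding P_def Q_def R_def T_def by auto
    define u where "u = P * T"
    define v where "v = R * Q"
    have uv: "u * v = (a*b)^2" unfolding u_def v_def
    proof -
      have "P * T * (R * Q) = (P*Q)*(R*T)" by (simp only: ac_simps)
      moreover have "(a*b)^2 = a^2 * b^2" by algebra
      ultimately show "P * T * (R * Q) = (a*b)^2" using PQ RT by simp
    qed
    have "u \<ge> 0" "v \<ge> 0" unfolding u_def v_def using pos by auto
    have e: "(u + v)^2 = (u - v)^2 + 4 * (u * v)" by algebra
    have e2: "(2*(a*b))^2 = 4 * (a*b)^2" by algebra
    have h1: "(2*(a*b))^2 = 4 * (u * v)" unfolding e2 uv by (rule refl)
    have h2: "4 * (u * v) \<le> (u + v)^2" unfolding e by (rule add_increasing[OF zero_le_power2 order_refl])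
    have sq: "(2*(a*b))^2 \<le> (u + v)^2" unfolding h1 by (rule h2)
    have uv2: "u + v \<ge> 2*(a*b)"
      by (rule power2_le_imp_le[OF sq]) (use \<open>u \<ge> 0\<close> \<open>v \<ge> 0\<close> in simp)
    have "(P - R) * (Q - T) = P*Q + R*T - u - v" unfolding u_def v_def by algebra
    moreover have "(b-a)^2 = b^2 + a^2 - 2*(a*b)" by algebra
    ultimately have "(P - R) * (Q - T) \<le> (b-a)^2" unfolding PQ RT using uv2 by linarith
    then show ?thesis unfolding P_def Q_def R_def T_def .
  qed
qed


lemma A2_wt: assumes "0 \<le> \<alpha>" "\<alpha> < 1"
  shows "A2_cl (wt \<alpha>) = ereal (1 / ((1-\<alpha>)*(1+\<alpha>)))"
proof -
  have si: "set_integrable lborel {0..1} (\<lambda>x. 1 / wt \<alpha> x)"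
    unfolding wt_inv using powr_int(1)[of \<alpha> 1] assms by simp
  let ?S = "{(a,b). 0 \<le> a \<and> a < b \<and> b \<le> (1::real)}"
  let ?g = "\<lambda>p. avg (wt \<alpha>) {fst p..snd p} * avg (\<lambda>x. 1 / wt \<alpha> x) {fst p..snd p}"
  have pos: "(1-\<alpha>)*(1+\<alpha>) > 0" using assms by simp
  have le: "?g p \<le> 1 / ((1-\<alpha>)*(1+\<alpha>))" if "p \<in> ?S" for p
  proof -
    obtain a b where p0: "p = (a,b)" by (cases p)
    have p: "p = (a,b)" "0 \<le> a" "a < b" using that p0 by auto
    have "?g p = ((b powr (1-\<alpha>) - a powr (1-\<alpha>)) * (b powr (1+\<alpha>) - a powr (1+\<alpha>)))
         / (((1-\<alpha>)*(1+\<alpha>)) * (b-a)^2)"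
      using avg_wt[OF assms p(2,3)] avg_wtinv[OF assms p(2,3)] p(1)
      by (simp add: power2_eq_square)
    also have "\<dots> \<le> (b-a)^2 / (((1-\<alpha>)*(1+\<alpha>)) * (b-a)^2)"
      using amgm_powr[OF p(2,3) assms] pos p by (intro divide_right_mono) auto
    also have "\<dots> = 1 / ((1-\<alpha>)*(1+\<alpha>))" using p by simp
    finally show ?thesis .
  qed
  have g01: "?g (0,1) = 1 / ((1-\<alpha>)*(1+\<alpha>))"
    using avg_wt[OF assms, of 0 1] avg_wtinv[OF assms, of 0 1] by simp
  have "(SUP p\<in>?S. ereal (?g p)) = ereal (1 / ((1-\<alpha>)*(1+\<alpha>)))"
  proof (rule antisym)
    show "(SUP p\<in>?S. ereal (?g p)) \<le> ereal (1 / ((1-\<alpha>)*(1+\<alpha>)))"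
      using le by (intro SUP_least) auto
    show "ereal (1 / ((1-\<alpha>)*(1+\<alpha>))) \<le> (SUP p\<in>?S. ereal (?g p))"
    proof -
      have "(0::real,1::real) \<in> ?S" by simp
      then have "ereal (?g (0,1)) \<le> (SUP p\<in>?S. ereal (?g p))" by (rule SUP_upper)
      then show ?thesis using g01 by simp
    qed
  qed
  then show ?thesis unfolding A2_cl_def using si by simp
qed


definition sp :: "real \<Rightarrow> real set \<Rightarrow> real" where
  "sp \<rho> I = (if Inf I = 0 then \<rho> * Sup I else (Inf I + Sup I) / 2)"

primrec Dn :: "real \<Rightarrow> nat \<Rightarrow> real set set" where
  "Dn \<rho> 0 = {{0..1}}"
| "Dn \<rho> (Suc n) = (\<Union>I\<in>Dn \<rho> n. {{Inf I..sp \<rho> I}, {sp \<rho> I..Sup I}})"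

locale dy = fixes \<rho> :: real assumes rho: "0 < \<rho>" "\<rho> < 1"
begin

abbreviation "D \<equiv> Dn \<rho>"

definition dinv :: "nat \<Rightarrow> real set \<Rightarrow> bool" where
  "dinv n I \<longleftrightarrow> (\<exists>a b. I = {a..b} \<and> 0 \<le> a \<and> a < b \<and> b \<le> 1 \<and>
      ((a = 0 \<and> b = \<rho>^n) \<or> (\<exists>j<n. \<rho>^(Suc j) \<le> a \<and> b \<le> \<rho>^j)))"

lemma rho_pow_mono: "m \<le> n \<Longrightarrow> \<rho>^n \<le> \<rho>^m"
  using rho by (simp add: power_decreasing)

lemma rho_pow_strict: "m < n \<Longrightarrow> \<rho>^n < \<rho>^m"
  using rho by (simp add: power_strict_decreasing)

lemma rho_pow_pos: "0 < \<rho>^n" using rho by simp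
lemma rho_pow_le1: "\<rho>^n \<le> 1" using rho by (simp add: power_le_one)

lemma sp_ab:
  assumes "dinv n I" obtains a b where "I = {a..b}" "0 \<le> a" "a < b" "b \<le> 1"
    "a < sp \<rho> I" "sp \<rho> I < b" "Inf I = a" "Sup I = b"
    "(a = 0 \<and> b = \<rho>^n \<and> sp \<rho> I = \<rho>^(Suc n)) \<or> (\<exists>j<n. \<rho>^(Suc j) \<le> a \<and> b \<le> \<rho>^j \<and> sp \<rho> I = (a+b)/2)"
proof -
  from assms obtain a b where ab: "I = {a..b}" "0 \<le> a" "a < b" "b \<le> 1"
      "(a = 0 \<and> b = \<rho>^n) \<or> (\<exists>j<n. \<rho>^(Suc j) \<le> a \<and> b \<le> \<rho>^j)"
    unfolding dinv_def by blast
  have IS: "Inf I = a" "Sup I = b" using ab by auto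
  show ?thesis
  proof (cases "a = 0 \<and> b = \<rho>^n")
    case True
    then have "sp \<rho> I = \<rho>^(Suc n)" unfolding sp_def IS by simp
    moreover have "0 < \<rho>^(Suc n)" "\<rho>^(Suc n) < \<rho>^n" using rho_pow_pos[of "Suc n"] rho_pow_strict[of n "Suc n"] by auto
    ultimately show ?thesis using that[of a b] ab IS True rho rho_pow_pos[of "Suc n"] by auto
  next
    case False
    then obtain j where j: "j < n" "\<rho>^(Suc j) \<le> a" "b \<le> \<rho>^j" using ab by auto
    then have "a \<noteq> 0" using rho_pow_pos[of "Suc j"] by auto
    then have "sp \<rho> I = (a+b)/2" unfolding sp_def IS by simp
    then show ?thesis using that[of a b] ab IS j by auto
  qed
qed

lemma D_inv: "I \<in> D n \<Longrightarrow> dinv n I"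
proof (induction n arbitrary: I)
  case 0
  then show ?case unfolding dinv_def by auto
next
  case (Suc n)
  then obtain I0 where I0: "I0 \<in> D n" "I = {Inf I0..sp \<rho> I0} \<or> I = {sp \<rho> I0..Sup I0}" by auto
  from Suc.IH[OF I0(1)] have iv: "dinv n I0" .
  obtain a b where ab: "I0 = {a..b}" "0 \<le> a" "a < b" "b \<le> 1"
    "a < sp \<rho> I0" "sp \<rho> I0 < b" "Inf I0 = a" "Sup I0 = b"
    "(a = 0 \<and> b = \<rho>^n \<and> sp \<rho> I0 = \<rho>^(Suc n)) \<or> (\<exists>j<n. \<rho>^(Suc j) \<le> a \<and> b \<le> \<rho>^j \<and> sp \<rho> I0 = (a+b)/2)"
    by (rule sp_ab[OF iv])
  show ?case
  proof (cases "a = 0 \<and> b = \<rho>^n \<and> sp \<rho> I0 = \<rho>^(Suc n)")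
    case True
    show ?thesis
      using I0(2) unfolding dinv_def
    proof
      assume "I = {Inf I0..sp \<rho> I0}"
      then show "\<exists>a b. I = {a..b} \<and> 0 \<le> a \<and> a < b \<and> b \<le> 1 \<and>
        (a = 0 \<and> b = \<rho> ^ Suc n \<or> (\<exists>j<Suc n. \<rho> ^ Suc j \<le> a \<and> b \<le> \<rho> ^ j))"
        using ab True by (intro exI[of _ 0] exI[of _ "\<rho>^Suc n"]) auto
    next
      assume "I = {sp \<rho> I0..Sup I0}"
      then show "\<exists>a b. I = {a..b} \<and> 0 \<le> a \<and> a < b \<and> b \<le> 1 \<and>
        (a = 0 \<and> b = \<rho> ^ Suc n \<or> (\<exists>j<Suc n. \<rho> ^ Suc j \<le> a \<and> b \<le> \<rho> ^ j))"
        using ab True by (intro exI[of _ "\<rho>^Suc n"] exI[of _ "\<rho>^n"]) auto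
    qed
  next
    case False
    then obtain j where j: "j < n" "\<rho>^(Suc j) \<le> a" "b \<le> \<rho>^j" "sp \<rho> I0 = (a+b)/2" using ab by auto
    show ?thesis
      using I0(2) unfolding dinv_def
    proof
      assume "I = {Inf I0..sp \<rho> I0}"
      then show "\<exists>a b. I = {a..b} \<and> 0 \<le> a \<and> a < b \<and> b \<le> 1 \<and>
        (a = 0 \<and> b = \<rho> ^ Suc n \<or> (\<exists>j<Suc n. \<rho> ^ Suc j \<le> a \<and> b \<le> \<rho> ^ j))"
      proof -
        have "I = {a..(a+b)/2}" "0 \<le> a" "a < (a+b)/2" "(a+b)/2 \<le> 1" "j < Suc n" "\<rho>^Suc j \<le> a" "(a+b)/2 \<le> \<rho>^j"
          using \<open>I = {Inf I0..sp \<rho> I0}\<close> ab j by auto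
        then show ?thesis by blast
      qed
    next
      assume "I = {sp \<rho> I0..Sup I0}"
      then show "\<exists>a b. I = {a..b} \<and> 0 \<le> a \<and> a < b \<and> b \<le> 1 \<and>
        (a = 0 \<and> b = \<rho> ^ Suc n \<or> (\<exists>j<Suc n. \<rho> ^ Suc j \<le> a \<and> b \<le> \<rho> ^ j))"
      proof -
        have "I = {(a+b)/2..b}" "0 \<le> (a+b)/2" "(a+b)/2 < b" "b \<le> 1" "j < Suc n" "\<rho>^Suc j \<le> (a+b)/2" "b \<le> \<rho>^j"
          using \<open>I = {sp \<rho> I0..Sup I0}\<close> ab j by auto
        then show ?thesis by blast
      qed
    qed
  qed
qed

lemma D_finite: "finite (D n)"
  by (induction n) auto

lemma chain_in: "{0..\<rho>^n} \<in> D n"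
proof (induction n)
  case 0
  then show ?case by simp
next
  case (Suc n)
  have "Inf {0..\<rho>^n} = 0" "Sup {0..\<rho>^n} = \<rho>^n" using rho_pow_pos[of n] by auto
  then have "sp \<rho> {0..\<rho>^n} = \<rho>^Suc n" unfolding sp_def by simp
  then show ?case using Suc \<open>Inf {0..\<rho>^n} = 0\<close> by force
qed

lemma D_sep: "I \<in> D n \<Longrightarrow> I' \<in> D n \<Longrightarrow> I \<noteq> I' \<Longrightarrow> Sup I \<le> Inf I' \<or> Sup I' \<le> Inf I"
proof (induction n arbitrary: I I')
  case 0
  then show ?case by simp
next
  case (Suc n)
  from Suc.prems(1) obtain I0 where I0: "I0 \<in> D n" "I = {Inf I0..sp \<rho> I0} \<or> I = {sp \<rho> I0..Sup I0}" by auto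
  from Suc.prems(2) obtain I1 where I1: "I1 \<in> D n" "I' = {Inf I1..sp \<rho> I1} \<or> I' = {sp \<rho> I1..Sup I1}" by auto
  obtain a b where ab: "I0 = {a..b}" "a < sp \<rho> I0" "sp \<rho> I0 < b" "Inf I0 = a" "Sup I0 = b"
    by (rule sp_ab[OF D_inv[OF I0(1)]])
  obtain a' b' where ab': "I1 = {a'..b'}" "a' < sp \<rho> I1" "sp \<rho> I1 < b'" "Inf I1 = a'" "Sup I1 = b'"
    by (rule sp_ab[OF D_inv[OF I1(1)]])
  have II: "Inf I \<ge> a" "Sup I \<le> b" "Inf I' \<ge> a'" "Sup I' \<le> b'"
    using I0(2) I1(2) ab ab' by auto
  show ?case
  proof (cases "I0 = I1")
    case True
    then show ?thesis using I0(2) I1(2) ab ab' Suc.prems(3) by auto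
  next
    case False
    then have "b \<le> a' \<or> b' \<le> a" using Suc.IH[OF I0(1) I1(1)] ab ab' by auto
    then show ?thesis using II by auto
  qed
qed

lemma D_sub: "J \<in> D (Suc n) \<Longrightarrow> \<exists>I\<in>D n. J \<subseteq> I"
proof -
  assume "J \<in> D (Suc n)"
  then obtain I0 where I0: "I0 \<in> D n" "J = {Inf I0..sp \<rho> I0} \<or> J = {sp \<rho> I0..Sup I0}" by auto
  obtain a b where ab: "I0 = {a..b}" "a < sp \<rho> I0" "sp \<rho> I0 < b" "Inf I0 = a" "Sup I0 = b"
    by (rule sp_ab[OF D_inv[OF I0(1)]])
  show ?thesis using I0 ab by (intro bexI[of _ I0]) auto
qed

lemma children_D:
  assumes "I \<in> D n"
  shows "children D n I = {{Inf I..sp \<rho> I}, {sp \<rho> I..Sup I}}"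
proof -
  obtain a b where ab: "I = {a..b}" "a < sp \<rho> I" "sp \<rho> I < b" "Inf I = a" "Sup I = b"
    by (rule sp_ab[OF D_inv[OF assms]])
  show ?thesis
  proof
    have "{Inf I..sp \<rho> I} \<in> D (Suc n)" "{sp \<rho> I..Sup I} \<in> D (Suc n)"
      unfolding Dn.simps by (rule UN_I[OF assms], simp)+
    then show "{{Inf I..sp \<rho> I}, {sp \<rho> I..Sup I}} \<subseteq> children D n I"
      unfolding children_def using assms ab by auto
    show "children D n I \<subseteq> {{Inf I..sp \<rho> I}, {sp \<rho> I..Sup I}}"
    proof
      fix J assume "J \<in> children D n I"
      then have J: "J \<in> D (Suc n)" "J \<subseteq> I" unfolding children_def by auto
      then obtain I1 where I1: "I1 \<in> D n" "J = {Inf I1..sp \<rho> I1} \<or> J = {sp \<rho> I1..Sup I1}" by auto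
      obtain a' b' where ab': "I1 = {a'..b'}" "a' < sp \<rho> I1" "sp \<rho> I1 < b'" "Inf I1 = a'" "Sup I1 = b'"
        by (rule sp_ab[OF D_inv[OF I1(1)]])
      obtain c d where cd: "J = {c..d}" "c < d" using sp_ab[OF D_inv[OF J(1)]] by metis
      show "J \<in> {{Inf I..sp \<rho> I}, {sp \<rho> I..Sup I}}"
      proof (cases "I1 = I")
        case True
        then show ?thesis using I1 by auto
      next
        case False
        then have sep: "b \<le> a' \<or> b' \<le> a" using D_sep[OF assms I1(1)] ab ab' by auto
        have "J \<subseteq> {a'..b'}" using I1(2) ab' by auto
        then have "a' \<le> c" "d \<le> b'" "a \<le> c" "d \<le> b" using cd J(2) ab by auto
        then show ?thesis using sep cd by auto
      qed
    qed
  qed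
qed

lemma nh: "nh_dyadic_filtration D"
  unfolding nh_dyadic_filtration_def
proof (intro conjI allI ballI)
  show "D 0 = {{0..1}}" by simp
next
  fix n J assume "J \<in> D (Suc n)" then show "\<exists>I\<in>D n. J \<subseteq> I" by (rule D_sub)
next
  fix n I assume I: "I \<in> D n"
  obtain a b where ab: "I = {a..b}" "a < sp \<rho> I" "sp \<rho> I < b" "Inf I = a" "Sup I = b"
    by (rule sp_ab[OF D_inv[OF I]])
  show "\<exists>a m b. a < m \<and> m < b \<and> I = {a..b} \<and> children D n I = {{a..m}, {m..b}}"
    using children_D[OF I] ab by (intro exI[of _ a] exI[of _ "sp \<rho> I"] exI[of _ b]) auto
qed

lemma D_cover: "\<Union>(D n) = {0..1}"
proof (induction n)
  case 0
  then show ?case by simp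
next
  case (Suc n)
  have "\<Union>(D (Suc n)) = (\<Union>I\<in>D n. {Inf I..sp \<rho> I} \<union> {sp \<rho> I..Sup I})" by auto
  also have "\<dots> = (\<Union>I\<in>D n. I)"
  proof (rule SUP_cong[OF refl])
    fix I assume I: "I \<in> D n"
    obtain a b where ab: "I = {a..b}" "a < sp \<rho> I" "sp \<rho> I < b" "Inf I = a" "Sup I = b"
      by (rule sp_ab[OF D_inv[OF I]])
    show "{Inf I..sp \<rho> I} \<union> {sp \<rho> I..Sup I} = I" using ab by auto
  qed
  finally show ?case using Suc by simp
qed

end


locale fx = dy + fixes K :: nat assumes K: "K \<ge> 1"
begin

definition r :: real where "r = \<rho> / (1 - \<rho>)"

definition V :: "nat \<Rightarrow> real" where "V j = (if j < K then real j - r else real K)"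

definition f :: "real \<Rightarrow> real" where
  "f x = (if x \<le> \<rho>^K then real K else
     (\<Sum>i<K. if \<rho>^Suc i < x \<and> x \<le> \<rho>^i then real i - r else 0))"

lemma r_nonneg: "0 \<le> r" unfolding r_def using rho by simp

lemma f_meas[measurable]: "f \<in> borel_measurable borel"
  unfolding f_def by measurable

lemma f_low: "x \<le> \<rho>^K \<Longrightarrow> f x = real K"
  unfolding f_def by simp

lemma f_val: assumes "\<rho>^Suc j < x" "x \<le> \<rho>^j" shows "f x = V j"
proof (cases "j < K")
  case False
  then have "\<rho>^j \<le> \<rho>^K" using rho_pow_mono[of K j] by simp
  then show ?thesis using assms False f_low unfolding V_def by simp
next
  case True
  have "\<rho>^K \<le> \<rho>^Suc j" by (rule rho_pow_mono) (use True in simp)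
  then have nl: "\<not> x \<le> \<rho>^K" using assms by simp
  have "(\<Sum>i<K. if \<rho>^Suc i < x \<and> x \<le> \<rho>^i then real i - r else 0)
      = (\<Sum>i<K. if i = j then real i - r else 0)"
  proof (rule sum.cong[OF refl])
    fix i assume "i \<in> {..<K}"
    have "(\<rho>^Suc i < x \<and> x \<le> \<rho>^i) \<longleftrightarrow> i = j"
    proof
      assume h: "\<rho>^Suc i < x \<and> x \<le> \<rho>^i"
      show "i = j"
      proof (rule ccontr)
        assume "i \<noteq> j"
        then have "i < j \<or> j < i" by auto
        then show False
        proof
          assume "i < j" then have "\<rho>^j \<le> \<rho>^Suc i" by (intro rho_pow_mono) simp
          then show False using h assms by simp
        next
          assume "j < i" then have "\<rho>^i \<le> \<rho>^Suc j" by (intro rho_pow_mono) simp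
          then show False using h assms by simp
        qed
      qed
    qed (use assms in simp)
    then show "(if \<rho>^Suc i < x \<and> x \<le> \<rho>^i then real i - r else 0) = (if i = j then real i - r else 0)"
      by simp
  qed
  also have "\<dots> = real j - r" using True by simp
  finally show ?thesis using nl True unfolding f_def V_def by simp
qed

lemma f_bnd: "\<bar>f x\<bar> \<le> real K + real K * (real K + r)"
proof (cases "x \<le> \<rho>^K")
  case True
  then show ?thesis using f_low r_nonneg by simp
next
  case False
  have "\<bar>\<Sum>i<K. if \<rho>^Suc i < x \<and> x \<le> \<rho>^i then real i - r else 0\<bar>
      \<le> (\<Sum>i<K. \<bar>if \<rho>^Suc i < x \<and> x \<le> \<rho>^i then real i - r else 0\<bar>)"
    by (rule sum_abs)
  also have "\<dots> \<le> (\<Sum>i<K. real K + r)"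
  proof (rule sum_mono)
    fix i assume "i \<in> {..<K}"
    then show "\<bar>if \<rho>^Suc i < x \<and> x \<le> \<rho>^i then real i - r else 0\<bar> \<le> real K + r"
      using r_nonneg by auto
  qed
  also have "\<dots> = real K * (real K + r)" by simp
  finally show ?thesis using False unfolding f_def by simp
qed

lemma f_int: "set_integrable lborel {a..b} f"
  unfolding set_integrable_def
  by (rule integrableI_bounded_set[where A="{a..b}" and B="real K + real K * (real K + r)"])
     (auto simp: f_bnd emeasure_lborel_Icc_eq split: split_indicator)

lemma lint_const:
  assumes "a < b" "\<And>x. a < x \<Longrightarrow> x \<le> b \<Longrightarrow> f x = c"
  shows "(LINT x:{a..b}|lborel. f x) = c * (b - a)"
proof -
  have "(LINT x:{a..b}|lborel. f x) = (LINT x:{a..b}|lborel. c)"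
  proof (rule set_lebesgue_integral_cong_AE)
    show "AE x\<in>{a..b} in lborel. f x = c"
      using AE_lborel_singleton[of a] by eventually_elim (use assms in auto)
  qed auto
  also have "\<dots> = c * (b - a)" using assms by (simp add: set_integral_const)
  finally show ?thesis .
qed

lemma avg_const:
  assumes "a < b" "\<And>x. a < x \<Longrightarrow> x \<le> b \<Longrightarrow> f x = c"
  shows "avg f {a..b} = c"
  using lint_const[OF assms] assms(1) unfolding avg_def by simp

lemma avg_piece: assumes "\<rho>^Suc j \<le> a" "a < b" "b \<le> \<rho>^j" shows "avg f {a..b} = V j"
  by (rule avg_const[OF assms(2)]) (use assms in \<open>auto intro!: f_val\<close>)

lemma lint_chain: "n \<le> K \<Longrightarrow> (LINT x:{0..\<rho>^n}|lborel. f x) = real n * \<rho>^n"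
proof (induction n rule: inc_induct)
  case base
  show ?case using lint_const[of 0 "\<rho>^K" "real K"] f_low rho_pow_pos[of K] by simp
next
  case (step n)
  have u: "{0..\<rho>^n} = {0..\<rho>^Suc n} \<union> {\<rho>^Suc n..\<rho>^n}"
    using rho_pow_pos[of "Suc n"] rho_pow_strict[of n "Suc n"] by auto
  have "(LINT x:{0..\<rho>^n}|lborel. f x) = (LINT x:{0..\<rho>^Suc n}|lborel. f x) + (LINT x:{\<rho>^Suc n..\<rho>^n}|lborel. f x)"
    unfolding u
  proof (rule set_integral_Un_AE)
    show "AE x in lborel. \<not> (x \<in> {0..\<rho> ^ Suc n} \<and> x \<in> {\<rho> ^ Suc n..\<rho> ^ n})"
      using AE_lborel_singleton[of "\<rho>^Suc n"] by eventually_elim auto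
  qed (auto intro: f_int)
  also have "(LINT x:{\<rho>^Suc n..\<rho>^n}|lborel. f x) = V n * (\<rho>^n - \<rho>^Suc n)"
    by (rule lint_const) (use rho_pow_strict[of n "Suc n"] in \<open>auto intro!: f_val\<close>)
  also have "V n = real n - r" using step unfolding V_def by simp
  finally have "(LINT x:{0..\<rho>^n}|lborel. f x) = real (Suc n) * \<rho>^Suc n + (real n - r) * (\<rho>^n - \<rho>^Suc n)"
    using step by simp
  also have "\<dots> = real n * \<rho>^n"
    using rho unfolding r_def by (simp add: field_simps)
  finally show ?case .
qed

lemma avg_chain: "avg f {0..\<rho>^n} = real (min n K)"
proof (cases "n \<le> K")
  case True
  then show ?thesis using lint_chain[OF True] rho_pow_pos[of n] rho unfolding avg_def by simp
next
  case False
  have "\<rho>^n \<le> \<rho>^K" using False rho_pow_mono[of K n] by simp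
  then have "avg f {0..\<rho>^n} = real K"
    by (intro avg_const) (use rho_pow_pos[of n] in \<open>auto intro!: f_low\<close>)
  then show ?thesis using False by simp
qed

end


context fx
begin

definition E :: "real set" where "E = (\<Union>n. \<Union>I\<in>D n. {Inf I, Sup I})"

lemma E_countable: "countable E"
proof -
  have "countable (\<Union>I\<in>D n. {Inf I, Sup I})" for n
    by (rule countable_finite) (use D_finite[of n] in auto)
  then show ?thesis unfolding E_def by (rule countable_UN[rotated]) simp
qed

lemma sum2: "A \<noteq> B \<Longrightarrow> sum g {A, B} = g A + g B" by simp

lemma lin3: "(v::real) * i1 + v * i2 - v * i3 = v * (i1 + i2 - i3)" by algebra

lemma ivl_ne: "(a::real) < m \<Longrightarrow> m < b \<Longrightarrow> {a..m} \<noteq> {m..b}"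
proof
  assume h: "a < m" "m < b" "{a..m} = {m..b}"
  have "a \<in> {a..m}" using h by simp
  then have "a \<in> {m..b}" using h by simp
  then show False using h by simp
qed

lemma E_null: "AE x in lborel. x \<notin> E"
  using countable_imp_null_set_lborel[OF E_countable] by (rule AE_not_in)

lemma in_E: "I \<in> D n \<Longrightarrow> Inf I \<in> E" "I \<in> D n \<Longrightarrow> Sup I \<in> E"
  unfolding E_def by auto

lemma sp_E: assumes "I \<in> D n" shows "sp \<rho> I \<in> E"
proof -
  obtain a b where ab: "I = {a..b}" "a < sp \<rho> I" "sp \<rho> I < b" "Inf I = a" "Sup I = b"
    by (rule sp_ab[OF D_inv[OF assms]])
  have "{Inf I..sp \<rho> I} \<in> D (Suc n)" unfolding Dn.simps by (rule UN_I[OF assms]) simp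
  moreover have "Sup {Inf I..sp \<rho> I} = sp \<rho> I" using ab by simp
  ultimately show ?thesis using in_E(2) by metis
qed

lemma interior_pt: assumes "I \<in> D n" "x \<in> I" "x \<notin> E" shows "Inf I < x" "x < Sup I"
proof -
  obtain a b where ab: "I = {a..b}" "a < sp \<rho> I" "sp \<rho> I < b" "Inf I = a" "Sup I = b"
    by (rule sp_ab[OF D_inv[OF assms(1)]])
  have "x \<noteq> a" "x \<noteq> b" using in_E[OF assms(1)] assms(3) ab by auto
  then show "Inf I < x" "x < Sup I" using assms(2) ab by auto
qed

lemma unique_pt: assumes "I \<in> D n" "I' \<in> D n" "x \<in> I" "x \<in> I'" "x \<notin> E" shows "I = I'"
proof (rule ccontr)
  assume "I \<noteq> I'"
  then have "Sup I \<le> Inf I' \<or> Sup I' \<le> Inf I" using D_sep assms by blast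
  then show False using interior_pt[OF assms(1,3,5)] interior_pt[OF assms(2,4,5)] by auto
qed

lemma good_k: assumes "x \<in> {0..1}" "x \<notin> E" obtains k where "\<rho>^Suc k < x" "x < \<rho>^k"
proof -
  have pw: "\<rho>^j \<in> E" for j using in_E(2)[OF chain_in[of j]] rho_pow_pos[of j] by simp
  have "0 \<in> E" "1 \<in> E" using in_E[of "{0..1}" 0] by auto
  then have x: "0 < x" "x < 1" using assms by (auto simp: less_le)
  have claim: "x \<le> \<rho>^n \<or> (\<exists>k. \<rho>^Suc k < x \<and> x < \<rho>^k)" for n
  proof (induction n)
    case 0 then show ?case using x by simp
  next
    case (Suc n)
    then show ?case
    proof
      assume h: "x \<le> \<rho>^n"
      then have "x < \<rho>^n" using pw[of n] assms(2) by (auto simp: less_le)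
      show ?case
      proof (cases "x \<le> \<rho>^Suc n")
        case True then show ?thesis by simp
      next
        case False
        then have "\<rho>^Suc n < x \<and> x < \<rho>^n" using \<open>x < \<rho>^n\<close> by simp
        then show ?thesis by blast
      qed
    qed auto
  qed
  obtain n where "\<rho>^n < x" using real_arch_pow_inv[OF x(1) rho(2)] by blast
  then have "\<not> x \<le> \<rho>^n" by simp
  then obtain k where "\<rho>^Suc k < x \<and> x < \<rho>^k" using claim[of n] by blast
  then show ?thesis using that by blast
qed

lemma mdiff_nonchain:
  assumes I: "I \<in> D n" "I \<noteq> {0..\<rho>^n}" and x: "x \<notin> E"
  shows "mdiff D n I f x = 0"
proof -
  obtain a b where ab: "I = {a..b}" "a < sp \<rho> I" "sp \<rho> I < b" "Inf I = a" "Sup I = b"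
    "(a = 0 \<and> b = \<rho>^n \<and> sp \<rho> I = \<rho>^(Suc n)) \<or> (\<exists>j<n. \<rho>^(Suc j) \<le> a \<and> b \<le> \<rho>^j \<and> sp \<rho> I = (a+b)/2)"
    by (rule sp_ab[OF D_inv[OF I(1)]])
  define m where "m = sp \<rho> I"
  obtain j where j: "\<rho>^(Suc j) \<le> a" "b \<le> \<rho>^j" using ab I(2) by auto
  have ch: "children D n I = {{a..m}, {m..b}}" using children_D[OF I(1)] ab unfolding m_def by simp
  have am: "a < m" "m < b" using ab unfolding m_def by auto
  have ne: "{a..m} \<noteq> {m..b}" using am by (rule ivl_ne)
  have v1: "avg f {a..m} = V j" "avg f {m..b} = V j" "avg f {a..b} = V j"
    using am j by (auto intro!: avg_piece)
  have xm: "x \<noteq> m" using sp_E[OF I(1)] x unfolding m_def by auto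
  have "indicator {a..m} x + indicator {m..b} x = (indicator {a..b} x :: real)"
    using xm am by (auto simp: indicator_def)
  moreover have "mdiff D n I f x = avg f {a..m} * indicator {a..m} x + avg f {m..b} * indicator {m..b} x - avg f {a..b} * indicator {a..b} x"
  proof -
    have ch2: "children D n {a..b} = {{a..m}, {m..b}}" using ch ab(1) by simp
    show ?thesis unfolding ab(1) mdiff_def ch2 sum2[OF ne] by (rule refl)
  qed
  ultimately show ?thesis unfolding v1 lin3 by simp
qed

lemma mdiff_chain:
  assumes x: "\<rho>^Suc k < x" "x < \<rho>^k"
  shows "mdiff D n {0..\<rho>^n} f x =
    (if n < k then (if n < K then 1 else 0) else if n = k then (if k < K then - r else 0) else 0)"
proof -
  have I: "{0..\<rho>^n} \<in> D n" by (rule chain_in)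
  have IS: "Inf {0..\<rho>^n} = 0" "Sup {0..\<rho>^n} = \<rho>^n" using rho_pow_pos[of n] by auto
  then have spv: "sp \<rho> {0..\<rho>^n} = \<rho>^Suc n" unfolding sp_def by simp
  have lt: "\<rho>^Suc n < \<rho>^n" "0 < \<rho>^Suc n" using rho_pow_strict[of n "Suc n"] rho_pow_pos[of "Suc n"] by auto
  have ch: "children D n {0..\<rho>^n} = {{0..\<rho>^Suc n}, {\<rho>^Suc n..\<rho>^n}}"
    using children_D[OF I] IS spv by simp
  have ne: "{0..\<rho>^Suc n} \<noteq> {\<rho>^Suc n..\<rho>^n}" using lt by (intro ivl_ne) auto
  have av1: "avg f {0..\<rho>^Suc n} = real (min (Suc n) K)" by (rule avg_chain)
  have av2: "avg f {\<rho>^Suc n..\<rho>^n} = V n" by (rule avg_piece) (use lt in auto)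
  have av3: "avg f {0..\<rho>^n} = real (min n K)" by (rule avg_chain)
  note av = av1 av2 av3
  have md: "mdiff D n {0..\<rho>^n} f x = real (min (Suc n) K) * indicator {0..\<rho>^Suc n} x
      + V n * indicator {\<rho>^Suc n..\<rho>^n} x - real (min n K) * indicator {0..\<rho>^n} x"
    unfolding mdiff_def ch sum2[OF ne] av by (rule refl)
  have x0: "0 < x" using x rho_pow_pos[of "Suc k"] by linarith
  show ?thesis
  proof (cases "n < k")
    case True
    have "\<rho>^k \<le> \<rho>^Suc n" using True by (intro rho_pow_mono) simp
    then have "x \<in> {0..\<rho>^Suc n}" "x \<notin> {\<rho>^Suc n..\<rho>^n}" "x \<in> {0..\<rho>^n}" using x x0 lt by auto
    then show ?thesis using md True by (auto simp: indicator_def)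
  next
    case False
    show ?thesis
    proof (cases "n = k")
      case True
      then have "x \<notin> {0..\<rho>^Suc n}" "x \<in> {\<rho>^Suc n..\<rho>^n}" "x \<in> {0..\<rho>^n}" using x x0 by auto
      then show ?thesis using md True unfolding V_def by (auto simp: indicator_def)
    next
      case False2: False
      then have "Suc k \<le> n" using False by simp
      then have "\<rho>^n \<le> \<rho>^Suc k" by (rule rho_pow_mono)
      then have "x \<notin> {0..\<rho>^Suc n}" "x \<notin> {\<rho>^Suc n..\<rho>^n}" "x \<notin> {0..\<rho>^n}" using x lt by auto
      then show ?thesis using md False False2 by (auto simp: indicator_def)
    qed
  qed
qed

end


context fx
begin

lemma sq_sum: assumes "x \<notin> E"
  shows "(\<Sum>I\<in>D n. (mdiff D n I f x)^2) = (mdiff D n {0..\<rho>^n} f x)^2"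
proof -
  have "(\<Sum>I\<in>D n. (mdiff D n I f x)^2) = (mdiff D n {0..\<rho>^n} f x)^2 + (\<Sum>I\<in>D n - {{0..\<rho>^n}}. (mdiff D n I f x)^2)"
    by (rule sum.remove[OF D_finite chain_in])
  also have "(\<Sum>I\<in>D n - {{0..\<rho>^n}}. (mdiff D n I f x)^2) = 0"
    by (rule sum.neutral) (use mdiff_nonchain assms in auto)
  finally show ?thesis by simp
qed

lemma count_le: "(\<Sum>n\<le>k. (if n < K then 1 else 0 :: real)) \<le> real K"
proof -
  have "(\<Sum>n\<le>k. (if n < K then 1 else 0 :: real)) = (\<Sum>n\<in>{n\<in>{..k}. n < K}. 1)"
    by (rule sum.inter_filter[symmetric]) simp
  also have "\<dots> = real (card {n\<in>{..k}. n < K})" by simp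
  also have "card {n\<in>{..k}. n < K} \<le> card {..<K}" by (rule card_mono) auto
  then have "real (card {n\<in>{..k}. n < K}) \<le> real K" by simp
  finally show ?thesis .
qed

lemma sqfun_bnd: assumes x: "x \<in> {0..1}" "x \<notin> E"
  shows "sqfun_sq D f x \<le> ennreal (real K + r^2)"
proof -
  obtain k where k: "\<rho>^Suc k < x" "x < \<rho>^k" using good_k[OF x] by blast
  define T where "T n = (mdiff D n {0..\<rho>^n} f x)^2" for n
  have Tv: "T n = (if n < k then (if n < K then 1 else 0) else if n = k then (if k < K then r^2 else 0) else 0)" for n
    unfolding T_def mdiff_chain[OF k] by auto
  have "sqfun_sq D f x = (\<Sum>n. ennreal (T n))"
    unfolding sqfun_sq_def T_def sq_sum[OF x(2)] by (rule refl)
  also have "\<dots> = (\<Sum>n\<le>k. ennreal (T n))"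
    by (rule suminf_finite) (auto simp: Tv)
  also have "\<dots> = ennreal (\<Sum>n\<le>k. T n)"
    by (rule sum_ennreal) (simp add: T_def)
  also have "(\<Sum>n\<le>k. T n) \<le> (\<Sum>n\<le>k. (if n < K then 1 else 0) + (if n = k then r^2 else 0))"
    by (rule sum_mono) (auto simp: Tv)
  also have "\<dots> = (\<Sum>n\<le>k. (if n < K then 1 else 0 :: real)) + r^2"
    by (simp add: sum.distrib)
  also have "\<dots> \<le> real K + r^2" using count_le[of k] by simp
  finally show ?thesis by (simp add: ennreal_leI)
qed

lemma cexp_eq: assumes x: "x \<in> {0..1}" "x \<notin> E" and k: "\<rho>^Suc k < x" "x < \<rho>^k" and n: "k < n"
  shows "cond_exp_n D n f x = f x"
proof -
  obtain I0 where I0: "I0 \<in> D n" "x \<in> I0" using x(1) D_cover[of n] by blast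
  have "\<rho>^n \<le> \<rho>^Suc k" using n by (intro rho_pow_mono) simp
  then have "x \<notin> {0..\<rho>^n}" using k by auto
  then have nc: "I0 \<noteq> {0..\<rho>^n}" using I0 by auto
  obtain a b where ab: "I0 = {a..b}" "a < sp \<rho> I0" "sp \<rho> I0 < b" "Inf I0 = a" "Sup I0 = b"
    "(a = 0 \<and> b = \<rho>^n \<and> sp \<rho> I0 = \<rho>^(Suc n)) \<or> (\<exists>j<n. \<rho>^(Suc j) \<le> a \<and> b \<le> \<rho>^j \<and> sp \<rho> I0 = (a+b)/2)"
    by (rule sp_ab[OF D_inv[OF I0(1)]])
  obtain j where j: "\<rho>^(Suc j) \<le> a" "b \<le> \<rho>^j" using ab nc by auto
  have axb: "a < x" "x < b" using interior_pt[OF I0(1,2) x(2)] ab by auto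
  have "j = k"
  proof (rule ccontr)
    assume "j \<noteq> k"
    then have "j < k \<or> k < j" by auto
    then show False
    proof
      assume "j < k" then have "\<rho>^k \<le> \<rho>^Suc j" by (intro rho_pow_mono) simp
      then show False using j axb k by simp
    next
      assume "k < j" then have "\<rho>^j \<le> \<rho>^Suc k" by (intro rho_pow_mono) simp
      then show False using j axb k by simp
    qed
  qed
  have av: "avg f I0 = V k" using ab(1) j axb \<open>j = k\<close> by (auto intro!: avg_piece)
  have fx: "f x = V k" using k by (intro f_val) auto
  have "cond_exp_n D n f x = avg f I0 * indicator I0 x + (\<Sum>I\<in>D n - {I0}. avg f I * indicator I x)"
    unfolding cond_exp_n_def by (rule sum.remove[OF D_finite I0(1)])
  also have "(\<Sum>I\<in>D n - {I0}. avg f I * indicator I x) = 0"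
  proof (rule sum.neutral, rule ballI)
    fix I assume "I \<in> D n - {I0}"
    then have "x \<notin> I" using unique_pt[OF _ I0(1) _ I0(2) x(2)] by blast
    then show "avg f I * indicator I x = 0" by simp
  qed
  finally show ?thesis using av fx I0(2) by simp
qed

lemma cexp_conv: "AE x in lborel. x \<in> {0..1} \<longrightarrow> (\<lambda>n. cond_exp_n D n f x) \<longlonglongrightarrow> f x"
  using E_null
proof eventually_elim
  case (elim x)
  show ?case
  proof
    assume x: "x \<in> {0..1}"
    obtain k where k: "\<rho>^Suc k < x" "x < \<rho>^k" using good_k[OF x elim] by blast
    have "eventually (\<lambda>n. cond_exp_n D n f x = f x) sequentially"
      unfolding eventually_sequentially using cexp_eq[OF x elim k] by (intro exI[of _ "Suc k"]) auto
    then show "(\<lambda>n. cond_exp_n D n f x) \<longlonglongrightarrow> f x" by (rule tendsto_eventually)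
  qed
qed

lemma sqfun_AE: "AE x in lborel. x \<in> {0..1} \<longrightarrow> sqfun_sq D f x \<le> ennreal (real K + r^2)"
  using E_null by eventually_elim (use sqfun_bnd in auto)

end


lemma real_ineq:
  fixes \<beta> A :: real and K :: nat
  assumes b: "0 < \<beta>" "\<beta> \<le> 1" and K1: "1/\<beta>^2 \<le> real K" and K2: "real K \<le> 2/\<beta>^2"
    and A: "0 \<le> A" "A \<le> 1/\<beta>"
  shows "((1/8) * A)^2 * (real K + ((1 - \<beta>/2) / (1 - (1 - \<beta>/2)))^2) \<le> (real K)^2 * ((1 - \<beta>/2)^K) powr \<beta>"
proof -
  define \<rho> where "\<rho> = 1 - \<beta>/2"
  have rho: "0 < \<rho>" "\<rho> < 1" using b unfolding \<rho>_def by auto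
  have lnr: "ln \<rho> \<ge> -\<beta>"
  proof -
    have "- (\<beta>/2) - 2 * (\<beta>/2)^2 \<le> ln (1 - \<beta>/2)"
      by (rule ln_one_minus_pos_lower_bound) (use b in auto)
    moreover have "- (\<beta>/2) - 2 * (\<beta>/2)^2 \<ge> -\<beta>"
    proof -
      have "\<beta>^2 \<le> \<beta>" using b by (simp add: power2_eq_square mult_le_cancel_left1)
      then show ?thesis by (simp add: power2_eq_square)
    qed
    ultimately show ?thesis unfolding \<rho>_def by linarith
  qed
  have bK: "\<beta>^2 * real K \<le> 2" using K2 b by (simp add: field_simps)
  have "\<beta> * (real K * ln \<rho>) \<ge> \<beta> * (real K * (-\<beta>))"
    using lnr b by (intro mult_left_mono) (auto intro: mult_left_mono)
  then have e1: "\<beta> * (real K * ln \<rho>) \<ge> -2" using bK by (simp add: power2_eq_square algebra_simps)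
  have pw: "(\<rho>^K) powr \<beta> = exp (\<beta> * (real K * ln \<rho>))"
    using rho by (simp add: powr_def ln_realpow)
  have ex2: "exp (2::real) \<le> 9"
  proof -
    have "exp (2::real) = exp 1 * exp 1" by (simp add: exp_add[symmetric])
    also have "\<dots> \<le> 3 * 3" using exp_le by (intro mult_mono) auto
    finally show ?thesis by simp
  qed
  have p1: "(\<rho>^K) powr \<beta> \<ge> 1/9"
  proof -
    have "exp (-2::real) \<le> exp (\<beta> * (real K * ln \<rho>))" using e1 by simp
    moreover have "exp (-2::real) = 1 / exp 2" by (simp add: exp_minus field_simps)
    moreover have "1/9 \<le> 1 / exp (2::real)" using ex2 by (intro divide_left_mono) auto
    ultimately show ?thesis using pw by linarith
  qed
  define r where "r = \<rho> / (1 - \<rho>)"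
  have r: "r = 2/\<beta> - 1" unfolding r_def \<rho>_def using b by (simp add: field_simps)
  have r0: "0 \<le> r" using b unfolding r by (simp add: field_simps)
  have "r \<le> 2/\<beta>" unfolding r by simp
  then have "r^2 \<le> (2/\<beta>)^2" using r0 by (intro power_mono) auto
  also have "\<dots> = 4 * (1/\<beta>^2)" by (simp add: power2_eq_square)
  finally have r2: "r^2 \<le> 4 * real K" using K1 by linarith
  have "A^2 \<le> (1/\<beta>)^2" using A by (intro power_mono) auto
  then have A2: "A^2 \<le> real K" using K1 by (simp add: power_divide)
  have "((1/8) * A)^2 * (real K + r^2) = A^2 * (real K + r^2) / 64" by (simp add: power2_eq_square)
  also have "\<dots> \<le> real K * (5 * real K) / 64"
    using A2 r2 r0 by (intro divide_right_mono mult_mono) auto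
  also have "\<dots> \<le> (real K)^2 * (1/9)" by (simp add: power2_eq_square)
  also have "\<dots> \<le> (real K)^2 * (\<rho>^K) powr \<beta>" using p1 by (intro mult_left_mono) auto
  finally show ?thesis unfolding r_def \<rho>_def .
qed


theorem theorem3p2:
  shows "\<exists>c::real. c > 0 \<and>
    (\<forall>A::real. A \<ge> 1 \<longrightarrow>
      (\<exists>w D f. is_weight w \<and> A2_cl w = ereal A \<and> nh_dyadic_filtration D \<and>
         f \<in> borel_measurable lborel \<and> L2w_sq w f < \<infinity> \<and>
         avg f {0..1} = 0 \<and>
         (AE x in lborel. x \<in> {0..1} \<longrightarrow> (\<lambda>n. cond_exp_n D n f x) \<longlonglongrightarrow> f x) \<and>
         L2w_sq w f > 0 \<and>
         ennreal ((c * A)\<^sup>2) * Sf_L2w_sq w D f \<le> L2w_sq w f))"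
proof (intro exI[of _ "1/8"] conjI allI impI)
  show "(0::real) < 1/8" by simp
  fix A :: real assume A1: "1 \<le> A"
  define \<alpha> where "\<alpha> = sqrt (1 - 1/A)"
  have a0: "0 \<le> \<alpha>" unfolding \<alpha>_def using A1 by simp
  have a1: "\<alpha> < 1"
  proof -
    have "sqrt (1 - 1/A) < sqrt 1" using A1 by (intro real_sqrt_less_mono) simp
    then show ?thesis unfolding \<alpha>_def by simp
  qed
  have asq: "\<alpha>^2 = 1 - 1/A" unfolding \<alpha>_def using A1 by simp
  have Aeq: "1 / ((1-\<alpha>)*(1+\<alpha>)) = A"
  proof -
    have "(1-\<alpha>)*(1+\<alpha>) = 1 - \<alpha>^2" by (simp add: power2_eq_square algebra_simps)
    also have "\<dots> = 1/A" using asq by simp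
    finally show ?thesis using A1 by simp
  qed
  define \<beta> where "\<beta> = 1 - \<alpha>"
  have b: "0 < \<beta>" "\<beta> \<le> 1" unfolding \<beta>_def using a0 a1 by auto
  define \<rho> where "\<rho> = 1 - \<beta>/2"
  have rho: "0 < \<rho>" "\<rho> < 1" unfolding \<rho>_def using b by auto
  define K where "K = nat \<lceil>1/\<beta>^2\<rceil>"
  have bb1: "1 \<le> 1/\<beta>^2" using b by (simp add: power_le_one)
  have K1: "1/\<beta>^2 \<le> real K" unfolding K_def by linarith
  have K2: "real K \<le> 2/\<beta>^2" unfolding K_def using bb1 by linarith
  have Kge: "K \<ge> 1" using K1 bb1 by linarith
  have Ab: "A \<le> 1/\<beta>"
  proof -
    have "A = 1 / (\<beta> * (1+\<alpha>))" using Aeq unfolding \<beta>_def by simp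
    also have "\<dots> \<le> 1 / (\<beta> * 1)" using b a0 by (intro divide_left_mono mult_left_mono mult_pos_pos) auto
    finally show ?thesis by simp
  qed
  interpret fx \<rho> K by unfold_locales (use rho Kge in auto)
  have ineq: "((1/8) * A)^2 * (real K + r^2) \<le> (real K)^2 * (\<rho>^K) powr \<beta>"
    using real_ineq[OF b K1 K2 _ Ab] A1 r_def unfolding \<rho>_def by simp
  let ?w = "wt \<alpha>"
  have wnn: "(\<integral>\<^sup>+x\<in>{0..s}. ennreal (?w x) \<partial>lborel) = ennreal (s powr \<beta> / \<beta>)" if "0 \<le> s" for s
    using powr_nn_int[of "-\<alpha>" s] that a1 unfolding wt_def \<beta>_def by simp
  have wmeas: "(\<lambda>x. ennreal (?w x) * indicator {a..b} x) \<in> borel_measurable borel" for a b :: real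
    unfolding wt_def by measurable
  define B where "B = real K + real K * (real K + r)"
  have fB: "(f x)^2 \<le> B^2" for x
    using f_bnd[of x] unfolding B_def by (metis abs_le_square_iff abs_of_nonneg abs_ge_zero order_trans power2_abs) 
  show "\<exists>w D f. is_weight w \<and> A2_cl w = ereal A \<and> nh_dyadic_filtration D \<and>
         f \<in> borel_measurable lborel \<and> L2w_sq w f < \<infinity> \<and>
         avg f {0..1} = 0 \<and>
         (AE x in lborel. x \<in> {0..1} \<longrightarrow> (\<lambda>n. cond_exp_n D n f x) \<longlonglongrightarrow> f x) \<and>
         L2w_sq w f > 0 \<and>
         ennreal ((1/8 * A)\<^sup>2) * Sf_L2w_sq w D f \<le> L2w_sq w f"
  proof -
    have g1: "is_weight ?w" by (rule is_weight_wt[OF a0 a1])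
    have g2: "A2_cl ?w = ereal A" using A2_wt[OF a0 a1] Aeq by simp
    have g3: "nh_dyadic_filtration D" by (rule nh)
    have g4: "f \<in> borel_measurable lborel" using f_meas by simp
    have g5: "avg f {0..1} = 0" using avg_chain[of 0] by simp
    have g6: "AE x in lborel. x \<in> {0..1} \<longrightarrow> (\<lambda>n. cond_exp_n D n f x) \<longlonglongrightarrow> f x" by (rule cexp_conv)
    have up: "L2w_sq ?w f \<le> ennreal (B^2) * ennreal (1 powr \<beta> / \<beta>)"
    proof -
      have "L2w_sq ?w f \<le> (\<integral>\<^sup>+x\<in>{0..1}. ennreal (B^2) * ennreal (?w x) \<partial>lborel)"
        unfolding L2w_sq_def
      proof (rule nn_integral_mono)
        fix x
        have "(f x)^2 * ?w x \<le> B^2 * ?w x" using fB[of x] wt_nonneg[of \<alpha> x] by (rule mult_right_mono)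
        then have "ennreal ((f x)^2 * ?w x) \<le> ennreal (B^2) * ennreal (?w x)"
          using wt_nonneg[of \<alpha> x] by (simp add: ennreal_mult[symmetric] ennreal_leI)
        then show "ennreal ((f x)^2 * ?w x) * indicator {0..1} x \<le> ennreal (B^2) * ennreal (?w x) * indicator {0..1} x"
          by (rule mult_right_mono) simp
      qed
      also have "\<dots> = ennreal (B^2) * (\<integral>\<^sup>+x\<in>{0..1}. ennreal (?w x) \<partial>lborel)"
        by (subst nn_integral_cmult[symmetric]) (auto simp: mult.assoc wmeas)
      also have "\<dots> = ennreal (B^2) * ennreal (1 powr \<beta> / \<beta>)" using wnn[of 1] by simp
      finally show ?thesis .
    qed
    then have g7: "L2w_sq ?w f < \<infinity>" by (simp add: ennreal_mult_less_top order_le_less_trans)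
    have lo: "ennreal ((real K)^2) * ennreal ((\<rho>^K) powr \<beta> / \<beta>) \<le> L2w_sq ?w f"
    proof -
      have "ennreal ((real K)^2) * ennreal ((\<rho>^K) powr \<beta> / \<beta>)
          = ennreal ((real K)^2) * (\<integral>\<^sup>+x\<in>{0..\<rho>^K}. ennreal (?w x) \<partial>lborel)"
        using wnn[of "\<rho>^K"] rho_pow_pos[of K] by simp
      also have "\<dots> = (\<integral>\<^sup>+x\<in>{0..\<rho>^K}. ennreal ((real K)^2) * ennreal (?w x) \<partial>lborel)"
        by (subst nn_integral_cmult[symmetric]) (auto simp: mult.assoc wmeas)
      also have "\<dots> \<le> L2w_sq ?w f"
        unfolding L2w_sq_def
      proof (rule nn_integral_mono)
        fix x
        show "ennreal ((real K)^2) * ennreal (?w x) * indicator {0..\<rho>^K} x \<le> ennreal ((f x)^2 * ?w x) * indicator {0..1} x"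
        proof (cases "x \<in> {0..\<rho>^K}")
          case True
          then have "x \<in> {0..1}" using rho_pow_le1[of K] by auto
          moreover have "f x = real K" using True by (intro f_low) auto
          ultimately show ?thesis using wt_nonneg[of \<alpha> x] True by (simp add: ennreal_mult[symmetric])
        qed simp
      qed
      finally show ?thesis .
    qed
    have pos: "0 < ennreal ((real K)^2) * ennreal ((\<rho>^K) powr \<beta> / \<beta>)"
    proof -
      have "0 < (real K)^2" using Kge by simp
      moreover have "0 < (\<rho>^K) powr \<beta> / \<beta>" using b rho_pow_pos[of K] rho by (intro divide_pos_pos) auto
      ultimately have "0 < (real K)^2 * ((\<rho>^K) powr \<beta> / \<beta>)" by (rule mult_pos_pos)
      then show ?thesis using b by (simp add: ennreal_mult[symmetric])
    qed
    have g8: "0 < L2w_sq ?w f" using pos lo by (rule order_less_le_trans)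
    have sf: "Sf_L2w_sq ?w D f \<le> ennreal (real K + r^2) * ennreal (1 powr \<beta> / \<beta>)"
    proof -
      have "Sf_L2w_sq ?w D f \<le> (\<integral>\<^sup>+x\<in>{0..1}. ennreal (real K + r^2) * ennreal (?w x) \<partial>lborel)"
        unfolding Sf_L2w_sq_def
      proof (rule nn_integral_mono_AE)
        show "AE x in lborel. sqfun_sq D f x * ennreal (?w x) * indicator {0..1} x
            \<le> ennreal (real K + r^2) * ennreal (?w x) * indicator {0..1} x"
          using sqfun_AE
        proof eventually_elim
          case (elim x)
          show ?case
          proof (cases "x \<in> {0..1}")
            case True
            then have "sqfun_sq D f x \<le> ennreal (real K + r^2)" using elim by simp
            then show ?thesis by (intro mult_right_mono) auto
          qed simp
        qed
      qed
      also have "\<dots> = ennreal (real K + r^2) * (\<integral>\<^sup>+x\<in>{0..1}. ennreal (?w x) \<partial>lborel)"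
        by (subst nn_integral_cmult[symmetric]) (auto simp: mult.assoc wmeas)
      also have "\<dots> = ennreal (real K + r^2) * ennreal (1 powr \<beta> / \<beta>)" using wnn[of 1] by simp
      finally show ?thesis .
    qed
    have "ennreal ((1/8 * A)\<^sup>2) * Sf_L2w_sq ?w D f \<le> ennreal ((1/8 * A)\<^sup>2) * (ennreal (real K + r^2) * ennreal (1 powr \<beta> / \<beta>))"
      using sf by (rule mult_left_mono) simp
    also have "\<dots> = ennreal ((1/8 * A)\<^sup>2 * ((real K + r^2) * (1 powr \<beta> / \<beta>)))"
    proof -
      have nX: "0 \<le> (1/8 * A)\<^sup>2" by simp
      have nY: "0 \<le> real K + r^2" using r_nonneg by simp
      have nZ: "0 \<le> 1 powr \<beta> / \<beta>" using b by simp
      have nYZ: "0 \<le> (real K + r^2) * (1 powr \<beta> / \<beta>)" using nY nZ by (rule mult_nonneg_nonneg)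
      show ?thesis by (simp only: ennreal_mult[OF nX nYZ] ennreal_mult[OF nY nZ])
    qed
    also have "\<dots> \<le> ennreal ((real K)^2 * (\<rho>^K) powr \<beta> / \<beta>)"
    proof (rule ennreal_leI)
      have "(1/8 * A)\<^sup>2 * ((real K + r^2) * (1 powr \<beta> / \<beta>)) = ((1/8 * A)\<^sup>2 * (real K + r^2)) / \<beta>"
        by simp
      also have "\<dots> \<le> ((real K)^2 * (\<rho>^K) powr \<beta>) / \<beta>"
        using ineq b by (intro divide_right_mono) auto
      finally show "(1/8 * A)\<^sup>2 * ((real K + r^2) * (1 powr \<beta> / \<beta>)) \<le> (real K)^2 * (\<rho>^K) powr \<beta> / \<beta>" .
    qed
    also have "\<dots> = ennreal ((real K)^2) * ennreal ((\<rho>^K) powr \<beta> / \<beta>)"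
      using b by (simp add: ennreal_mult[symmetric])
    also have "\<dots> \<le> L2w_sq ?w f" by (rule lo)
    finally have g9: "ennreal ((1/8 * A)\<^sup>2) * Sf_L2w_sq ?w D f \<le> L2w_sq ?w f" .
    show ?thesis using g1 g2 g3 g4 g5 g6 g7 g8 g9 by blast
  qed
qed

end
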